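(* Consider an instance of the Nash equilibrium complementarity problem (NECP) that satisfies the dominance condition, and the instance of the tropical Nash equilibrium complementarity problem (TNECP) given by its logarithmic image ($M^-=\log(-M)$, $q^+=\log q$). The sequence of bases over which the Lemke--Howson algorithm iterates does not depend on whether it is applied to the classical instance or the tropical one. In particular, it returns a basis of a solution of the classical instance within at most $2n-1$ iterations.
   Context: NECP: given $n\times n$ real $M$ with nonpositive columns each having a negative entry and $q>0$, find $(w,z)$ with $w=Mz+q$, $w^\top z=0$, $z\neq 0$, $w,z\geq0$; written as $(I\ \ -M)\binom{w}{z}=q$ with columns indexed by $[n]\uplus[n]$ (blue copy for $w$, red for $z$). TNECP over max-plus $\mathbb{T}=\mathbb{R}\cup\{-\infty\}$: $w\oplus M^-\odot z=q^+$, $w^\top\odot z=-\infty$, $z\neq-\infty$. Classical bases are feasible bases of the linear system; tropical bases of $A\odot x=b$ are $B$ with $|B|=n$ and a bijection $\phi:[n]\to B$ such that $b_i-A_{i\phi(i)}\in\mathbb{T}$ is minimal among $b_k-A_{k\phi(i)}$. Dominance condition: the normalized matrix $(\operatorname{diag} q)^{-1}(I\ \ -M)(\operatorname{diag} u)^{-1}$ ($u_j$ = max entry of column $j$ of $(\operatorname{diag} q)^{-1}(I\ \ -M)$) satisfies (a) some $n\times n$ submatrix covers a permutation matrix and (b) every $n\times n$ submatrix covering a permutation matrix has all row sums less than $2$; under it both systems are nondegenerate. The Lemke--Howson algorithm, for fixed $j^\star\in[n]$, starts from basis $[n]\uplus\varnothing$ with entering element $(j^\star,\text{red})$, repeatedly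 pivots to the unique other basis in $B\cup\{\gamma\}$, takes as next entering element the twin (same label, other color) of the leaving element, and stops at a fully labeled basis (all labels $1,\dots,n$ appear). *)

theory Defs
  imports "HOL-Analysis.Analysis"
begin

text \<open>Column indices are ('n + 'n): Inl j is the blue copy (variable w_j),
  Inr j is the red copy (variable z_j). The label of both is j.\<close>

fun twin :: "'n + 'n \<Rightarrow> 'n + 'n" where
  "twin (Inl j) = Inr j"
| "twin (Inr j) = Inl j"

definition fully_labeled :: "('n + 'n) set \<Rightarrow> bool" where
  "fully_labeled B \<longleftrightarrow> (\<forall>i. Inl i \<in> B \<or> Inr i \<in> B)"

definition NECP_instance :: "real^'n^'n \<Rightarrow> real^'n \<Rightarrow> bool" where
  "NECP_instance M q \<longleftrightarrow>
     (\<forall>i j. M$i$j \<le> 0) \<and> (\<forall>j. \<exists>i. M$i$j < 0) \<and> (\<forall>i. q$i > 0)"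

definition NECP_solution :: "real^'n^'n \<Rightarrow> real^'n \<Rightarrow> real^'n \<Rightarrow> real^'n \<Rightarrow> bool" where
  "NECP_solution M q w z \<longleftrightarrow>
     w = M *v z + q \<and> w \<bullet> z = 0 \<and> z \<noteq> 0 \<and> (\<forall>i. w$i \<ge> 0) \<and> (\<forall>i. z$i \<ge> 0)"

definition NECP_matrix :: "real^'n^'n \<Rightarrow> real^('n + 'n)^'n" where
  "NECP_matrix M = (\<chi> i c. case c of Inl j \<Rightarrow> (if i = j then 1 else 0) | Inr j \<Rightarrow> - M$i$j)"

definition classical_basis :: "real^'c::finite^'m \<Rightarrow> real^'m \<Rightarrow> 'c set \<Rightarrow> bool" where
  "classical_basis A b B \<longleftrightarrow>
     card B = CARD('m) \<and> inj_on (\<lambda>c. column c A) B \<and>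
     independent ((\<lambda>c. column c A) ` B) \<and>
     (\<exists>x :: 'c \<Rightarrow> real. (\<forall>c. 0 \<le> x c) \<and> (\<forall>c. c \<notin> B \<longrightarrow> x c = 0) \<and>
        (\<Sum>c\<in>B. x c *\<^sub>R column c A) = b)"

text \<open>Tropical semiring T = R \<union> {-\<infinity>} modelled inside ereal (never using +\<infinity> as an entry).
  Logarithm with log 0 = -\<infinity>.\<close>
definition trop_log :: "real \<Rightarrow> ereal" where
  "trop_log x = (if x > 0 then ereal (ln x) else -\<infinity>)"

definition TNECP_matrix :: "real^'n^'n \<Rightarrow> ereal^('n + 'n)^'n" where
  "TNECP_matrix M = (\<chi> i c. case c of Inl j \<Rightarrow> (if i = j then 0 else -\<infinity>)
                                       | Inr j \<Rightarrow> trop_log (- M$i$j))"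

definition TNECP_rhs :: "real^'n \<Rightarrow> ereal^'n" where
  "TNECP_rhs q = (\<chi> i. trop_log (q$i))"

definition tropical_basis :: "ereal^'c::finite^'m \<Rightarrow> ereal^'m \<Rightarrow> 'c set \<Rightarrow> bool" where
  "tropical_basis A b B \<longleftrightarrow>
     card B = CARD('m) \<and>
     (\<exists>\<phi>. bij_betw \<phi> (UNIV :: 'm set) B \<and>
        (\<forall>i. b$i - A$i$(\<phi> i) \<noteq> \<infinity> \<and>
             (\<forall>k. b$i - A$i$(\<phi> i) \<le> b$k - A$k$(\<phi> i))))"

definition scaled_matrix :: "real^'n^'n \<Rightarrow> real^'n \<Rightarrow> real^('n + 'n)^'n" where
  "scaled_matrix M q = (\<chi> i c. (NECP_matrix M)$i$c / q$i)"

definition col_max :: "real^'n^'n \<Rightarrow> real^'n \<Rightarrow> 'n + 'n \<Rightarrow> real" where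
  "col_max M q c = (MAX i. (scaled_matrix M q)$i$c)"

definition normalized_matrix :: "real^'n^'n \<Rightarrow> real^'n \<Rightarrow> real^('n + 'n)^'n" where
  "normalized_matrix M q = (\<chi> i c. (scaled_matrix M q)$i$c / col_max M q c)"

definition covers_permutation :: "real^('n + 'n)^'n \<Rightarrow> ('n + 'n) set \<Rightarrow> bool" where
  "covers_permutation N S \<longleftrightarrow>
     card S = CARD('n) \<and>
     (\<exists>\<sigma>. bij_betw \<sigma> (UNIV :: 'n set) S \<and>
        (\<forall>i. \<forall>c\<in>S. N$i$c \<ge> (if c = \<sigma> i then 1 else 0)))"

definition dominance :: "real^'n^'n \<Rightarrow> real^'n \<Rightarrow> bool" where
  "dominance M q \<longleftrightarrow>
     (let N = normalized_matrix M q in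
       (\<exists>S. covers_permutation N S) \<and>
       (\<forall>S. covers_permutation N S \<longrightarrow> (\<forall>i. (\<Sum>c\<in>S. N$i$c) < 2)))"

text \<open>A run of the Lemke--Howson algorithm for a notion of basis isB and missing label jstar:
  Bs is the sequence of bases, Gs!t is the element entering at step t.  Iterations = length Bs - 1.\<close>
definition LH_run :: "(('n + 'n) set \<Rightarrow> bool) \<Rightarrow> 'n \<Rightarrow> ('n + 'n) set list \<Rightarrow> ('n + 'n) list \<Rightarrow> bool" where
  "LH_run isB jstar Bs Gs \<longleftrightarrow>
     length Bs \<ge> 2 \<and> length Gs = length Bs - 1 \<and>
     Bs!0 = range Inl \<and> isB (Bs!0) \<and> Gs!0 = Inr jstar \<and>
     (\<forall>t < length Bs - 1.
        isB (Bs!Suc t) \<and> Bs!Suc t \<subseteq> insert (Gs!t) (Bs!t) \<and> Bs!Suc t \<noteq> Bs!t \<and>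
        (\<forall>B'. isB B' \<and> B' \<subseteq> insert (Gs!t) (Bs!t) \<and> B' \<noteq> Bs!t \<longrightarrow> B' = Bs!Suc t)) \<and>
     (\<forall>t. Suc t < length Bs - 1 \<longrightarrow>
        insert (Gs!t) (Bs!t) - Bs!Suc t = {twin (Gs!Suc t)}) \<and>
     (\<forall>t. 0 < t \<and> t < length Bs - 1 \<longrightarrow> \<not> fully_labeled (Bs!t)) \<and>
     fully_labeled (last Bs)"

definition basis_of_solution :: "real^'n^'n \<Rightarrow> real^'n \<Rightarrow> ('n + 'n) set \<Rightarrow> bool" where
  "basis_of_solution M q B \<longleftrightarrow>
     classical_basis (NECP_matrix M) q B \<and>
     (\<exists>w z. NECP_solution M q w z \<and>
        (\<forall>i. w$i \<noteq> 0 \<longrightarrow> Inl i \<in> B) \<and> (\<forall>j. z$j \<noteq> 0 \<longrightarrow> Inr j \<in> B))"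

end

theory Submission
  imports Defs
begin

locale lh =
  fixes M :: "real^'n^'n" and q :: "real^'n"
  assumes inst: "NECP_instance M q" and domi: "dominance M q"
begin

definition A :: "'n \<Rightarrow> 'n + 'n \<Rightarrow> real" where "A i c = NECP_matrix M $ i $ c"
definition G :: "'n \<Rightarrow> 'n + 'n \<Rightarrow> real" where "G i c = A i c / q$i"
definition u :: "'n + 'n \<Rightarrow> real" where "u c = (MAX i. G i c)"
definition N :: "'n \<Rightarrow> 'n + 'n \<Rightarrow> real" where "N i c = G i c / u c"

lemma q_pos: "q$i > 0" using inst by (simp add: NECP_instance_def)
lemma M_nonpos: "M$i$j \<le> 0" using inst by (simp add: NECP_instance_def)
lemma A_Inl: "A i (Inl j) = (if i = j then 1 else 0)" by (simp add: A_def NECP_matrix_def)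
lemma A_Inr: "A i (Inr j) = - M$i$j" by (simp add: A_def NECP_matrix_def)
lemma A_nonneg: "A i c \<ge> 0"
  by (cases c) (auto simp: A_Inl A_Inr M_nonpos)
lemma G_nonneg: "G i c \<ge> 0" using A_nonneg[of i c] q_pos[of i] by (simp add: G_def)
lemma G_le_u: "G i c \<le> u c" unfolding u_def by (rule Max_ge) auto
lemma u_attained: "\<exists>i. G i c = u c"
proof -
  have "u c \<in> range (\<lambda>i. G i c)" unfolding u_def by (rule Max_in) auto
  then show ?thesis by auto
qed
lemma G_pos_ex: "\<exists>i. G i c > 0"
proof (cases c)
  case (Inl j) then show ?thesis using q_pos[of j] by (intro exI[of _ j]) (simp add: G_def A_Inl)
next
  case (Inr j)
  from inst obtain i where "M$i$j < 0" unfolding NECP_instance_def by blast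
  then show ?thesis using Inr q_pos[of i] by (intro exI[of _ i]) (simp add: G_def A_Inr divide_neg_pos)
qed
lemma u_pos: "u c > 0" using G_pos_ex[of c] G_le_u[of _ c] by (meson less_le_trans)
lemma N_nonneg: "N i c \<ge> 0" using G_nonneg[of i c] u_pos[of c] by (simp add: N_def)
lemma N_le1: "N i c \<le> 1" using G_le_u[of i c] u_pos[of c] by (simp add: N_def)
lemma N_eq1_iff: "N i c = 1 \<longleftrightarrow> G i c = u c" using u_pos[of c] by (auto simp: N_def)
lemma N_ex1: "\<exists>i. N i c = 1" using u_attained N_eq1_iff by auto

lemma sm_eq: "scaled_matrix M q $ i $ c = G i c"
  unfolding scaled_matrix_def G_def A_def by simp
lemma cm_eq: "col_max M q c = u c"
  unfolding col_max_def u_def sm_eq ..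
lemma nm_eq: "normalized_matrix M q $ i $ c = N i c"
  unfolding normalized_matrix_def N_def by (simp only: vec_lambda_beta sm_eq cm_eq)

lemma dom_sum:
  assumes "bij_betw \<sigma> (UNIV::'n set) S" "\<And>i. N i (\<sigma> i) = 1"
  shows "(\<Sum>c\<in>S. N i c) < 2"
proof -
  have "covers_permutation (normalized_matrix M q) S"
    unfolding covers_permutation_def nm_eq
    using assms bij_betw_same_card[OF assms(1)] N_nonneg by auto
  with domi show ?thesis unfolding dominance_def Let_def nm_eq by blast
qed

lemma N_Inl: "N i (Inl j) = 1 \<Longrightarrow> i = j"
  using u_pos[of "Inl j"] q_pos[of i] by (auto simp: N_def G_def A_Inl split: if_splits)

lemma N_Inl_diag: "N j (Inl j) = 1"
  using N_ex1[of "Inl j"] N_Inl by blast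

lemma N1_unique: assumes "N i c = 1" "N i' c = 1" shows "i = i'"
proof (cases c)
  case (Inl j) then show ?thesis using assms N_Inl by blast
next
  case (Inr j)
  show ?thesis
  proof (rule ccontr)
    assume ne: "i \<noteq> i'"
    define \<sigma> where "\<sigma> k = (if k = i then Inr j else Inl k)" for k
    have inj: "inj \<sigma>" unfolding inj_def \<sigma>_def by auto
    have bij: "bij_betw \<sigma> UNIV (range \<sigma>)" using inj by (simp add: bij_betw_def)
    have "\<And>k. N k (\<sigma> k) = 1" using assms Inr N_Inl_diag by (simp add: \<sigma>_def)
    from dom_sum[OF bij this, of i'] have lt: "(\<Sum>c\<in>range \<sigma>. N i' c) < 2" .
    have sub: "{Inl i', Inr j} \<subseteq> range \<sigma>"
      using ne by (auto simp: \<sigma>_def intro!: range_eqI[of _ _ i'] range_eqI[of _ _ i])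
    have "(\<Sum>c\<in>{Inl i', Inr j}. N i' c) \<le> (\<Sum>c\<in>range \<sigma>. N i' c)"
      by (rule sum_mono2[OF _ sub]) (auto simp: N_nonneg)
    moreover have "(\<Sum>c\<in>{Inl i', Inr j}. N i' c) = 2"
      using assms Inr N_Inl_diag by simp
    ultimately show False using lt by simp
  qed
qed

definition r :: "'n + 'n \<Rightarrow> 'n" where "r c = (THE i. N i c = 1)"

lemma r_prop: "N (r c) c = 1"
  unfolding r_def by (rule theI') (use N_ex1 N1_unique in blast)
lemma r_iff: "N i c = 1 \<longleftrightarrow> i = r c"
  using r_prop[of c] N1_unique[of i c "r c"] by auto
lemma r_Inl: "r (Inl j) = j" using N_Inl_diag[of j] r_iff[of j "Inl j"] by simp
lemma N_lt1: "i \<noteq> r c \<Longrightarrow> N i c < 1" using N_le1[of i c] r_iff[of i c] by linarith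

lemma dom_J:
  assumes inj: "inj_on r J"
  shows "(\<Sum>c\<in>{c\<in>J. r c \<noteq> i}. N i c) < 1"
proof -
  define S where "S = J \<union> Inl ` (- (r ` J))"
  define \<sigma> where "\<sigma> k = (if k \<in> r ` J then inv_into J r k else Inl k)" for k
  have r\<sigma>: "r (\<sigma> k) = k" for k
  proof (cases "k \<in> r ` J")
    case True then show ?thesis unfolding \<sigma>_def by (simp add: f_inv_into_f)
  next
    case False then show ?thesis unfolding \<sigma>_def by (simp add: r_Inl)
  qed
  have bij: "bij_betw \<sigma> UNIV S"
    unfolding bij_betw_def
  proof
    show "inj \<sigma>" by (rule injI) (metis r\<sigma>)
    show "range \<sigma> = S"
    proof
      show "range \<sigma> \<subseteq> S" by (auto simp: \<sigma>_def S_def inv_into_into)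
      show "S \<subseteq> range \<sigma>"
      proof
        fix c assume "c \<in> S"
        then show "c \<in> range \<sigma>"
        proof (cases "c \<in> J")
          case True
          then have "\<sigma> (r c) = c" using inj by (auto simp: \<sigma>_def)
          then show ?thesis by (metis rangeI)
        next
          case False
          with \<open>c \<in> S\<close> obtain k where "c = Inl k" "k \<notin> r ` J" by (auto simp: S_def)
          then have "\<sigma> k = c" by (simp add: \<sigma>_def)
          then show ?thesis by (metis rangeI)
        qed
      qed
    qed
  qed
  have "\<And>k. N k (\<sigma> k) = 1" using r\<sigma> r_prop by metis
  from dom_sum[OF bij this, of i] have lt: "(\<Sum>c\<in>S. N i c) < 2" .
  have fin: "finite S" by simp
  have "\<sigma> i \<in> S" using bij bij_betwE by blast
  then have split: "(\<Sum>c\<in>S. N i c) = N i (\<sigma> i) + (\<Sum>c\<in>S - {\<sigma> i}. N i c)"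
    by (simp add: sum.remove)
  have sub: "{c\<in>J. r c \<noteq> i} \<subseteq> S - {\<sigma> i}" using r\<sigma> by (auto simp: S_def)
  have "(\<Sum>c\<in>{c\<in>J. r c \<noteq> i}. N i c) \<le> (\<Sum>c\<in>S - {\<sigma> i}. N i c)"
    by (rule sum_mono2[OF _ sub]) (auto simp: N_nonneg)
  moreover have "N i (\<sigma> i) = 1" using r\<sigma>[of i] r_prop[of "\<sigma> i"] by simp
  ultimately show ?thesis using lt split by linarith
qed

end

context lh begin

definition isC :: "('n + 'n) set \<Rightarrow> bool" where "isC B \<longleftrightarrow> bij_betw r B UNIV"

lemma isC_finite: "isC B \<Longrightarrow> finite B"
  unfolding isC_def using bij_betw_finite[of r B UNIV] by simp

lemma isC_inj: "isC B \<Longrightarrow> inj_on r B" unfolding isC_def bij_betw_def by blast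

lemma isC_diff: "isC B \<Longrightarrow> c0 \<in> B \<Longrightarrow> B - {c0} = {c\<in>B. r c \<noteq> r c0}"
  using isC_inj[of B] by (auto simp: inj_on_def)

lemma split_row:
  assumes "isC B" "c0 \<in> B"
  shows "(\<Sum>c\<in>B. y c * N (r c0) c) = y c0 + (\<Sum>c\<in>{c\<in>B. r c \<noteq> r c0}. y c * N (r c0) c)"
proof -
  have "(\<Sum>c\<in>B. y c * N (r c0) c) = y c0 * N (r c0) c0 + (\<Sum>c\<in>B - {c0}. y c * N (r c0) c)"
    using assms isC_finite by (simp add: sum.remove)
  then show ?thesis using isC_diff[OF assms] r_prop[of c0] by simp
qed

definition e :: "'n \<Rightarrow> ('n + 'n) set \<Rightarrow> real" where
  "e k B = (\<Sum>c\<in>{c\<in>B. r c \<noteq> k}. N k c)"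

lemma e_nonneg: "e k B \<ge> 0" unfolding e_def by (rule sum_nonneg) (simp add: N_nonneg)
lemma e_lt1: "isC B \<Longrightarrow> e k B < 1" unfolding e_def by (rule dom_J) (rule isC_inj)

lemma sum_le_max:
  assumes "finite S" "\<And>c. c \<in> S \<Longrightarrow> y c \<le> X"
  shows "(\<Sum>c\<in>S. y c * N k c) \<le> X * (\<Sum>c\<in>S. N k c)"
proof -
  have "(\<Sum>c\<in>S. y c * N k c) \<le> (\<Sum>c\<in>S. X * N k c)"
    by (intro sum_mono mult_right_mono) (simp_all add: assms N_nonneg)
  then show ?thesis by (simp add: sum_distrib_left)
qed

lemma sum_ge_min:
  assumes "finite S" "\<And>c. c \<in> S \<Longrightarrow> y c \<ge> X"
  shows "(\<Sum>c\<in>S. y c * N k c) \<ge> X * (\<Sum>c\<in>S. N k c)"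
proof -
  have "(\<Sum>c\<in>S. y c * N k c) \<ge> (\<Sum>c\<in>S. X * N k c)"
    by (intro sum_mono mult_right_mono) (simp_all add: assms N_nonneg)
  then show ?thesis by (simp add: sum_distrib_left)
qed

lemma indep_N:
  assumes B: "isC B" and eq: "\<And>i. (\<Sum>c\<in>B. v c * N i c) = 0" and c: "c \<in> B"
  shows "v c = 0"
proof -
  have fin: "finite B" using isC_finite[OF B] .
  define X where "X = Max ((\<lambda>c. \<bar>v c\<bar>) ` B)"
  have "X \<in> (\<lambda>c. \<bar>v c\<bar>) ` B" unfolding X_def using fin c by (intro Max_in) auto
  then obtain c0 where c0: "c0 \<in> B" "\<bar>v c0\<bar> = X" by auto
  have le: "\<bar>v c'\<bar> \<le> X" if "c' \<in> B" for c' unfolding X_def using fin that by (intro Max_ge) auto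
  let ?S = "{c\<in>B. r c \<noteq> r c0}"
  have "v c0 = - (\<Sum>c\<in>?S. v c * N (r c0) c)" using split_row[OF B c0(1), of v] eq[of "r c0"] by simp
  then have "\<bar>v c0\<bar> = \<bar>\<Sum>c\<in>?S. v c * N (r c0) c\<bar>" by simp
  also have "\<dots> \<le> (\<Sum>c\<in>?S. \<bar>v c\<bar> * N (r c0) c)"
    using sum_abs[of "\<lambda>c. v c * N (r c0) c" ?S] by (simp only: abs_mult abs_of_nonneg[OF N_nonneg])
  also have "\<dots> \<le> X * e (r c0) B" unfolding e_def
    by (rule sum_le_max) (simp_all add: fin le)
  finally have "X \<le> X * e (r c0) B" using c0 by simp
  moreover have "X \<ge> 0" using c0 by auto
  moreover have "e (r c0) B < 1" using e_lt1[OF B] .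
  ultimately have "X = 0"
  proof -
    assume a: "X \<le> X * e (r c0) B" "X \<ge> 0" "e (r c0) B < 1"
    show "X = 0"
    proof (rule ccontr)
      assume "X \<noteq> 0"
      then have "X > 0" using a by simp
      then have "X * (1 - e (r c0) B) > 0" using a by simp
      then show False using a by (simp add: algebra_simps)
    qed
  qed
  then show ?thesis using le[OF c] by simp
qed

lemma pos_N:
  assumes B: "isC B" and eq: "\<And>i. (\<Sum>c\<in>B. y c * N i c) = 1" and c: "c \<in> B"
  shows "y c \<ge> 0"
proof -
  have fin: "finite B" using isC_finite[OF B] .
  define X where "X = Max (y ` B)"
  define \<mu> where "\<mu> = Min (y ` B)"
  have "X \<in> y ` B" unfolding X_def using fin c by (intro Max_in) auto
  then obtain c1 where c1: "c1 \<in> B" "y c1 = X" by auto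
  have "\<mu> \<in> y ` B" unfolding \<mu>_def using fin c by (intro Min_in) auto
  then obtain c0 where c0: "c0 \<in> B" "y c0 = \<mu>" by auto
  have le: "y c' \<le> X" if "c' \<in> B" for c' unfolding X_def using fin that by (intro Max_ge) auto
  have ge: "y c' \<ge> \<mu>" if "c' \<in> B" for c' unfolding \<mu>_def using fin that by (intro Min_le) auto
  define e0 where "e0 = e (r c0) B"
  define e1 where "e1 = e (r c1) B"
  have e0: "0 \<le> e0" "e0 < 1" unfolding e0_def using e_nonneg e_lt1[OF B] by auto
  have e1: "0 \<le> e1" "e1 < 1" unfolding e1_def using e_nonneg e_lt1[OF B] by auto
  have r0: "\<mu> + (\<Sum>c\<in>{c\<in>B. r c \<noteq> r c0}. y c * N (r c0) c) = 1"
    using split_row[OF B c0(1), of y] eq[of "r c0"] c0 by simp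
  have "(\<Sum>c\<in>{c\<in>B. r c \<noteq> r c0}. y c * N (r c0) c) \<le> X * e0"
    unfolding e0_def e_def by (rule sum_le_max) (simp_all add: fin le)
  with r0 have A1: "\<mu> \<ge> 1 - X * e0" by linarith
  have r1: "X + (\<Sum>c\<in>{c\<in>B. r c \<noteq> r c1}. y c * N (r c1) c) = 1"
    using split_row[OF B c1(1), of y] eq[of "r c1"] c1 by simp
  have "(\<Sum>c\<in>{c\<in>B. r c \<noteq> r c1}. y c * N (r c1) c) \<ge> \<mu> * e1"
    unfolding e1_def e_def by (rule sum_ge_min) (simp_all add: fin ge)
  with r1 have A2: "X \<le> 1 - \<mu> * e1" by linarith
  have "\<mu> \<ge> 0"
  proof (rule ccontr)
    assume neg: "\<not> \<mu> \<ge> 0"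
    have "X * e0 \<le> (1 - \<mu> * e1) * e0" using A2 e0(1) by (rule mult_right_mono)
    then have "\<mu> \<ge> 1 - e0 + \<mu> * (e0 * e1)" using A1 by (simp add: algebra_simps)
    moreover have "e0 * e1 \<le> e0 * 1" using e0(1) e1(2) by (intro mult_left_mono) auto
    moreover have "\<mu> * (e0 * e1) \<ge> \<mu> * 1" using neg e0 e1 \<open>e0 * e1 \<le> e0 * 1\<close>
      by (intro mult_left_mono_neg) auto
    ultimately show False using neg e0 by linarith
  qed
  then show ?thesis using ge[OF c] by simp
qed

end

context lh begin

lemma rows_to_isC:
  assumes card: "card B = CARD('n)" and y0: "\<And>c. c \<in> B \<Longrightarrow> y c \<ge> 0"
    and eq: "\<And>i. (\<Sum>c\<in>B. y c * N i c) = 1"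
  shows "isC B"
proof -
  have "CARD('n) > 0" by simp
  then have fin: "finite B" using card card_ge_0_finite by metis
  define P where "P = {c\<in>B. y c > 0}"
  have Psub: "P \<subseteq> B" unfolding P_def by auto
  have finP: "finite P" using fin Psub finite_subset by blast
  have bound: "(\<Sum>c\<in>{c\<in>P. r c = k}. y c) \<le> 1" for k
  proof -
    have "(\<Sum>c\<in>{c\<in>P. r c = k}. y c) = (\<Sum>c\<in>{c\<in>P. r c = k}. y c * N k c)"
      by (rule sum.cong) (auto simp: r_prop)
    also have "\<dots> \<le> (\<Sum>c\<in>B. y c * N k c)"
      by (rule sum_mono2[OF fin]) (use Psub y0 N_nonneg in auto)
    finally show ?thesis using eq[of k] by simp
  qed
  have cover: "r ` P = UNIV"
  proof (rule ccontr)
    assume "r ` P \<noteq> UNIV"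
    then obtain i where i: "i \<notin> r ` P" by auto
    have "\<forall>k\<in>r`P. \<exists>c. c \<in> P \<and> r c = k \<and> (\<forall>c'\<in>P. r c' = k \<longrightarrow> N i c' \<le> N i c)"
    proof
      fix k assume k: "k \<in> r`P"
      let ?T = "{c\<in>P. r c = k}"
      have fT: "finite ?T" using finP by auto
      have nT: "?T \<noteq> {}" using k by auto
      have "Max (N i ` ?T) \<in> N i ` ?T" using fT nT by (intro Max_in) auto
      then obtain c where c: "c \<in> ?T" "N i c = Max (N i ` ?T)" by auto
      have "\<forall>c'\<in>?T. N i c' \<le> N i c" using c fT by auto
      then show "\<exists>c. c \<in> P \<and> r c = k \<and> (\<forall>c'\<in>P. r c' = k \<longrightarrow> N i c' \<le> N i c)"
        using c by blast
    qed
    then obtain ch where ch: "\<And>k. k \<in> r`P \<Longrightarrow> ch k \<in> P \<and> r (ch k) = k \<and> (\<forall>c'\<in>P. r c' = k \<longrightarrow> N i c' \<le> N i (ch k))"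
      by metis
    have chP: "ch k \<in> P" and chr: "r (ch k) = k" if "k \<in> r`P" for k using ch[OF that] by auto
    have injch: "inj_on ch (r`P)"
    proof (rule inj_onI)
      fix k k' assume kk: "k \<in> r`P" "k' \<in> r`P" "ch k = ch k'"
      then have "r (ch k) = r (ch k')" by simp
      then show "k = k'" using chr[OF kk(1)] chr[OF kk(2)] by simp
    qed
    have "1 = (\<Sum>c\<in>B. y c * N i c)" using eq[of i] by simp
    also have "\<dots> = (\<Sum>c\<in>P. y c * N i c)"
    proof (rule sum.mono_neutral_right[OF fin Psub])
      show "\<forall>c\<in>B - P. y c * N i c = 0"
      proof
        fix c assume "c \<in> B - P"
        then have "y c = 0" using y0[of c] unfolding P_def by auto
        then show "y c * N i c = 0" by simp
      qed
    qed
    also have "\<dots> = (\<Sum>k\<in>r`P. \<Sum>c\<in>{c\<in>P. r c = k}. y c * N i c)"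
      by (rule sum.image_gen[OF finP])
    also have "\<dots> \<le> (\<Sum>k\<in>r`P. N i (ch k) * (\<Sum>c\<in>{c\<in>P. r c = k}. y c))"
    proof (rule sum_mono)
      fix k assume k: "k \<in> r`P"
      have "(\<Sum>c\<in>{c\<in>P. r c = k}. y c * N i c) \<le> (\<Sum>c\<in>{c\<in>P. r c = k}. y c * N i (ch k))"
      proof (rule sum_mono)
        fix c assume "c \<in> {c\<in>P. r c = k}"
        then show "y c * N i c \<le> y c * N i (ch k)"
          using ch[OF k] y0 Psub by (intro mult_left_mono) auto
      qed
      also have "\<dots> = N i (ch k) * (\<Sum>c\<in>{c\<in>P. r c = k}. y c)"
        by (simp add: sum_distrib_left mult.commute)
      finally show "(\<Sum>c\<in>{c\<in>P. r c = k}. y c * N i c) \<le> N i (ch k) * (\<Sum>c\<in>{c\<in>P. r c = k}. y c)" .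
    qed
    also have "\<dots> \<le> (\<Sum>k\<in>r`P. N i (ch k))"
    proof (rule sum_mono)
      fix k
      show "N i (ch k) * (\<Sum>c\<in>{c\<in>P. r c = k}. y c) \<le> N i (ch k)"
        using mult_left_mono[OF bound[of k] N_nonneg[of i "ch k"]] by simp
    qed
    also have "\<dots> = (\<Sum>c\<in>ch`(r`P). N i c)"
      by (simp add: sum.reindex[OF injch])
    also have "\<dots> < 1"
    proof -
      let ?J = "ch`(r`P)"
      have injr: "inj_on r ?J"
      proof (rule inj_onI)
        fix c c' assume "c \<in> ?J" "c' \<in> ?J" "r c = r c'"
        then obtain k k' where kk: "k \<in> r`P" "k' \<in> r`P" "c = ch k" "c' = ch k'" "r c = r c'" by blast
        then have "k = k'" using chr[OF kk(1)] chr[OF kk(2)] by simp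
        then show "c = c'" using kk by simp
      qed
      have "{c\<in>?J. r c \<noteq> i} = ?J" using chr i by force
      then show ?thesis using dom_J[OF injr, of i] by simp
    qed
    finally show False by simp
  qed
  have "card (UNIV::'n set) \<le> card P" using card_image_le[OF finP, of r] cover by simp
  then have "card P = card B" using card_mono[OF fin Psub] card by simp
  then have PB: "P = B" using card_subset_eq[OF fin Psub] by simp
  have "card (r ` B) = card B" using cover PB card by simp
  then have "inj_on r B" using eq_card_imp_inj_on[OF fin] by blast
  then show ?thesis unfolding isC_def bij_betw_def using cover PB by simp
qed

abbreviation col :: "'n + 'n \<Rightarrow> real^'n" where "col c \<equiv> column c (NECP_matrix M)"

lemma col_comp: "col c $ i = A i c" by (simp add: column_def A_def)

lemma sum_col_comp: "(\<Sum>c\<in>B. w c *\<^sub>R col c) $ i = (\<Sum>c\<in>B. w c * A i c)"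
  by (simp add: col_comp)

lemma sum_N: "(\<Sum>c\<in>B. (w c * u c) * N i c) = (\<Sum>c\<in>B. w c * A i c) / q$i"
proof -
  have "(w c * u c) * N i c = w c * A i c / q$i" for c
    using u_pos[of c] by (simp add: N_def G_def)
  then show ?thesis by (simp add: sum_divide_distrib)
qed

lemma qnz: "q$i \<noteq> 0" using q_pos[of i] by simp

lemma sum_col_eq_q:
  "(\<Sum>c\<in>B. w c *\<^sub>R col c) = q \<longleftrightarrow> (\<forall>i. (\<Sum>c\<in>B. (w c * u c) * N i c) = 1)"
proof -
  have "(\<Sum>c\<in>B. w c *\<^sub>R col c) = q \<longleftrightarrow> (\<forall>i. (\<Sum>c\<in>B. w c * A i c) = q$i)"
    by (simp add: vec_eq_iff col_comp)
  also have "\<dots> \<longleftrightarrow> (\<forall>i. (\<Sum>c\<in>B. (w c * u c) * N i c) = 1)"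
    using q_pos by (auto simp: sum_N qnz)
  finally show ?thesis .
qed

lemma sum_col_eq_0:
  "(\<Sum>c\<in>B. w c *\<^sub>R col c) = 0 \<longleftrightarrow> (\<forall>i. (\<Sum>c\<in>B. (w c * u c) * N i c) = 0)"
proof -
  have "(\<Sum>c\<in>B. w c *\<^sub>R col c) = 0 \<longleftrightarrow> (\<forall>i. (\<Sum>c\<in>B. w c * A i c) = 0)"
    by (simp add: vec_eq_iff col_comp)
  also have "\<dots> \<longleftrightarrow> (\<forall>i. (\<Sum>c\<in>B. (w c * u c) * N i c) = 0)"
    using q_pos by (auto simp: sum_N qnz)
  finally show ?thesis .
qed

lemma classical_imp_isC:
  assumes "classical_basis (NECP_matrix M) q B" shows "isC B"
proof -
  from assms obtain x where card: "card B = CARD('n)" and x0: "\<forall>c. 0 \<le> x c"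
    and s: "(\<Sum>c\<in>B. x c *\<^sub>R col c) = q"
    unfolding classical_basis_def by blast
  have "\<forall>i. (\<Sum>c\<in>B. (x c * u c) * N i c) = 1" using s sum_col_eq_q[of x B] by simp
  then show ?thesis
    using rows_to_isC[OF card, of "\<lambda>c. x c * u c"] x0 u_pos by (simp add: less_imp_le)
qed

lemma isC_imp_classical:
  assumes B: "isC B" shows "classical_basis (NECP_matrix M) q B"
proof -
  have fin: "finite B" using isC_finite[OF B] .
  have card: "card B = CARD('n)" using B unfolding isC_def by (simp add: bij_betw_same_card)
  have inj: "inj_on col B"
  proof (rule inj_onI)
    fix c c' assume cc: "c \<in> B" "c' \<in> B" "col c = col c'"
    then have "A i c = A i c'" for i using col_comp by metis
    then have "N i c = N i c'" for i unfolding N_def G_def u_def by simp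
    then have "r c = r c'" using r_iff by metis
    then show "c = c'" using isC_inj[OF B] cc by (auto simp: inj_on_def)
  qed
  have ind: "independent (col ` B)"
    unfolding independent_explicit
  proof (intro conjI allI impI ballI)
    show "finite (col ` B)" using fin by simp
    fix coef v assume s: "(\<Sum>v\<in>col ` B. coef v *\<^sub>R v) = 0" and v: "v \<in> col ` B"
    have "(\<Sum>c\<in>B. coef (col c) *\<^sub>R col c) = 0" using s by (simp add: sum.reindex[OF inj])
    then have "\<forall>i. (\<Sum>c\<in>B. (coef (col c) * u c) * N i c) = 0" using sum_col_eq_0[of "\<lambda>c. coef (col c)" B] by simp
    then have "coef (col c) * u c = 0" if "c \<in> B" for c
      using indep_N[OF B, of "\<lambda>c. coef (col c) * u c"] that by blast
    moreover obtain c where "c \<in> B" "v = col c" using v by blast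
    ultimately show "coef v = 0" using u_pos[of c] by fastforce
  qed
  have "UNIV \<subseteq> span (col ` B)"
  proof (rule card_ge_dim_independent[OF _ ind])
    show "col ` B \<subseteq> UNIV" by simp
    show "dim (UNIV :: (real^'n) set) \<le> card (col ` B)"
      using card card_image[OF inj] by simp
  qed
  then have "q \<in> span (col ` B)" by auto
  then obtain w where w: "q = (\<Sum>v\<in>col ` B. w v *\<^sub>R v)"
    using span_finite[of "col ` B"] fin by auto
  define x where "x c = (if c \<in> B then w (col c) else 0)" for c
  have sx: "(\<Sum>c\<in>B. x c *\<^sub>R col c) = q"
    using w by (simp add: sum.reindex[OF inj] x_def)
  then have rows: "\<forall>i. (\<Sum>c\<in>B. (x c * u c) * N i c) = 1" using sum_col_eq_q[of x B] by simp
  have x0: "0 \<le> x c" for c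
  proof (cases "c \<in> B")
    case True
    have "0 \<le> x c * u c" using pos_N[OF B, of "\<lambda>c. x c * u c"] rows True by blast
    then show ?thesis using u_pos[of c] by (simp add: zero_le_mult_iff)
  next
    case False then show ?thesis by (simp add: x_def)
  qed
  have xz: "\<forall>c. c \<notin> B \<longrightarrow> x c = 0" by (simp add: x_def)
  show ?thesis unfolding classical_basis_def
    using card inj ind x0 sx xz by blast
qed

lemma classical_eq: "classical_basis (NECP_matrix M) q = isC"
  using classical_imp_isC isC_imp_classical by blast

end

context lh begin

definition tv :: "'n \<Rightarrow> 'n + 'n \<Rightarrow> ereal" where
  "tv i c = (if G i c > 0 then ereal (- ln (G i c)) else \<infinity>)"

lemma trop_val: "TNECP_rhs q $ i - TNECP_matrix M $ i $ c = tv i c"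
proof -
  have rhs: "TNECP_rhs q $ i = ereal (ln (q$i))" using q_pos[of i] by (simp add: TNECP_rhs_def trop_log_def)
  show ?thesis
  proof (cases c)
    case (Inl j)
    show ?thesis
    proof (cases "i = j")
      case True
      have "G i c = 1 / q$i" using Inl True by (simp add: G_def A_Inl)
      moreover have "ln (1 / q$i) = - ln (q$i)" using q_pos[of i] by (simp add: ln_div)
      ultimately show ?thesis using Inl True q_pos[of i] rhs by (simp add: TNECP_matrix_def tv_def)
    next
      case False
      have "G i c = 0" using Inl False by (simp add: G_def A_Inl)
      then show ?thesis using Inl False rhs by (simp add: TNECP_matrix_def tv_def)
    qed
  next
    case (Inr j)
    have G: "G i c = - M$i$j / q$i" using Inr by (simp add: G_def A_Inr)
    show ?thesis
    proof (cases "- M$i$j > 0")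
      case True
      have Gp: "G i c > 0" using G True q_pos[of i] by (simp add: divide_neg_pos)
      have "ln (- M$i$j / q$i) = ln (- M$i$j) - ln (q$i)" by (rule ln_divide_pos) (use True q_pos[of i] in auto)
      then have "- ln (G i c) = ln (q$i) - ln (- M$i$j)" using G by simp
      then show ?thesis using Inr True rhs Gp by (simp add: TNECP_matrix_def tv_def trop_log_def)
    next
      case False
      have "- M$i$j / q$i \<le> 0" by (rule divide_nonpos_pos) (use False q_pos[of i] in auto)
      then have "\<not> G i c > 0" using G by simp
      then show ?thesis using Inr False rhs by (simp add: TNECP_matrix_def tv_def trop_log_def)
    qed
  qed
qed

lemma trop_cond: "(tv i c \<noteq> \<infinity> \<and> (\<forall>k. tv i c \<le> tv k c)) \<longleftrightarrow> i = r c"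
proof
  assume a: "tv i c \<noteq> \<infinity> \<and> (\<forall>k. tv i c \<le> tv k c)"
  then have Gi: "G i c > 0" by (auto simp: tv_def split: if_splits)
  have ge: "G k c \<le> G i c" for k
  proof (cases "G k c > 0")
    case True
    from a have "tv i c \<le> tv k c" by blast
    then have "- ln (G i c) \<le> - ln (G k c)" using Gi True by (simp add: tv_def)
    then show ?thesis using Gi True by simp
  next
    case False then show ?thesis using Gi by simp
  qed
  obtain k where "G k c = u c" using u_attained by blast
  then have "G i c = u c" using ge[of k] G_le_u[of i c] by simp
  then show "i = r c" using N_eq1_iff r_iff by blast
next
  assume "i = r c"
  then have Gi: "G i c = u c" using r_prop N_eq1_iff by blast
  then have Gp: "G i c > 0" using u_pos by simp
  have "tv i c \<le> tv k c" for k
  proof (cases "G k c > 0")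
    case True
    have "G k c \<le> G i c" using Gi G_le_u by simp
    then have "ln (G k c) \<le> ln (G i c)" using True by simp
    then show ?thesis using True Gp by (simp add: tv_def)
  next
    case False then show ?thesis by (simp add: tv_def)
  qed
  then show "tv i c \<noteq> \<infinity> \<and> (\<forall>k. tv i c \<le> tv k c)" using Gp by (simp add: tv_def)
qed

lemma tropical_eq: "tropical_basis (TNECP_matrix M) (TNECP_rhs q) = isC"
proof (rule ext)
  fix B :: "('n + 'n) set"
  have "tropical_basis (TNECP_matrix M) (TNECP_rhs q) B \<longleftrightarrow>
        card B = CARD('n) \<and> (\<exists>\<phi>. bij_betw \<phi> (UNIV::'n set) B \<and> (\<forall>i. i = r (\<phi> i)))"
    unfolding tropical_basis_def trop_val trop_cond by simp
  also have "\<dots> \<longleftrightarrow> isC B"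
  proof
    assume "card B = CARD('n) \<and> (\<exists>\<phi>. bij_betw \<phi> (UNIV::'n set) B \<and> (\<forall>i. i = r (\<phi> i)))"
    then obtain \<phi> where \<phi>: "bij_betw \<phi> (UNIV::'n set) B" "\<And>i. i = r (\<phi> i)" by blast
    have inj: "inj_on r B"
    proof (rule inj_onI)
      fix c c' assume cc: "c \<in> B" "c' \<in> B" "r c = r c'"
      obtain i where i: "c = \<phi> i" using cc(1) \<phi>(1) unfolding bij_betw_def by auto
      obtain i' where i': "c' = \<phi> i'" using cc(2) \<phi>(1) unfolding bij_betw_def by auto
      have "i = i'" using \<phi>(2)[of i] \<phi>(2)[of i'] cc(3) i i' by simp
      then show "c = c'" using i i' by simp
    qed
    have "r ` B = UNIV"
    proof (rule set_eqI, rule iffI)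
      fix i :: 'n
      have "\<phi> i \<in> B" using \<phi>(1) unfolding bij_betw_def by auto
      then show "i \<in> r ` B" using \<phi>(2)[of i] by (metis image_eqI)
    qed simp
    then show "isC B" unfolding isC_def bij_betw_def using inj by simp
  next
    assume B: "isC B"
    then have bij: "bij_betw r B UNIV" unfolding isC_def .
    have "card B = CARD('n)" using bij by (simp add: bij_betw_same_card)
    moreover have "bij_betw (inv_into B r) (UNIV::'n set) B" using bij_betw_inv_into[OF bij] .
    moreover have "\<forall>i. i = r (inv_into B r i)"
      using bij unfolding bij_betw_def by (simp add: f_inv_into_f)
    ultimately show "card B = CARD('n) \<and> (\<exists>\<phi>. bij_betw \<phi> (UNIV::'n set) B \<and> (\<forall>i. i = r (\<phi> i)))"
      by blast
  qed
  finally show "tropical_basis (TNECP_matrix M) (TNECP_rhs q) B = isC B" .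
qed

end

lemma twin_twin: "twin (twin c) = c" by (cases c) auto

locale comb =
  fixes r :: "'n::finite + 'n \<Rightarrow> 'n"
  assumes r_Inl: "r (Inl j) = j"
begin

definition isB :: "('n + 'n) set \<Rightarrow> bool" where "isB B \<longleftrightarrow> bij_betw r B UNIV"

lemma isB_finite: "isB B \<Longrightarrow> finite B"
  unfolding isB_def using bij_betw_finite[of r B UNIV] by simp

lemma isB_card: "isB B \<Longrightarrow> card B = CARD('n)"
  unfolding isB_def by (simp add: bij_betw_same_card)

lemma isB_Inl: "isB (range Inl)"
  unfolding isB_def bij_betw_def
proof
  show "inj_on r (range Inl)" by (rule inj_onI) (auto simp: r_Inl)
  show "r ` range Inl = UNIV" by (auto simp: r_Inl image_iff)
qed

lemma swap:
  assumes B: "isB B" and g: "\<gamma> \<notin> B" and c: "c \<in> B" and rc: "r c = r \<gamma>"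
  shows "isB (insert \<gamma> B - {c})"
proof -
  have inj: "inj_on r B" and im: "r ` B = UNIV" using B unfolding isB_def bij_betw_def by auto
  have gc: "\<gamma> \<noteq> c" using g c by auto
  have eq: "insert \<gamma> B - {c} = insert \<gamma> (B - {c})" using gc by auto
  have nin: "r \<gamma> \<notin> r ` (B - {c})"
  proof
    assume "r \<gamma> \<in> r ` (B - {c})"
    then obtain c' where c': "c' \<in> B - {c}" "r \<gamma> = r c'" by blast
    then have "r c' = r c" using rc by simp
    then have "c' = c" using inj c c' by (auto simp: inj_on_def)
    then show False using c' by simp
  qed
  have inj2: "inj_on r (insert \<gamma> (B - {c}))"
    using inj nin by (auto simp: inj_on_insert intro: inj_on_subset)
  have "r ` (insert \<gamma> (B - {c})) = insert (r \<gamma>) (r ` (B - {c}))" by simp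
  also have "\<dots> = UNIV"
  proof (rule set_eqI, rule iffI)
    fix i :: 'n
    obtain c' where c': "c' \<in> B" "r c' = i" using im by (metis UNIV_I imageE)
    show "i \<in> insert (r \<gamma>) (r ` (B - {c}))"
    proof (cases "c' = c")
      case True then show ?thesis using c' rc by simp
    next
      case False then show ?thesis using c' by auto
    qed
  qed simp
  finally show ?thesis unfolding isB_def bij_betw_def eq using inj2 by simp
qed

lemma uniq:
  assumes B: "isB B" and g: "\<gamma> \<notin> B" and c: "c \<in> B" and rc: "r c = r \<gamma>"
    and B': "isB B'" "B' \<subseteq> insert \<gamma> B" "B' \<noteq> B"
  shows "B' = insert \<gamma> B - {c}"
proof -
  have fin: "finite B" using isB_finite[OF B] .
  have cardB': "card B' = card B" using isB_card B B' by simp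
  have gB': "\<gamma> \<in> B'"
  proof (rule ccontr)
    assume "\<gamma> \<notin> B'"
    then have "B' \<subseteq> B" using B' by auto
    then have "B' = B" using card_subset_eq[OF fin] cardB' by simp
    then show False using B' by simp
  qed
  have cB': "c \<notin> B'"
  proof
    assume "c \<in> B'"
    moreover have "c \<noteq> \<gamma>" using g c by auto
    ultimately show False using gB' rc B'(1) unfolding isB_def bij_betw_def inj_on_def by metis
  qed
  have sub: "B' \<subseteq> insert \<gamma> B - {c}" using B' cB' by auto
  have "card (insert \<gamma> B - {c}) = card B" using fin g c by simp
  then show ?thesis using card_subset_eq[OF _ sub] fin cardB' by simp
qed

lemma run_from_steps:
  fixes B :: "nat \<Rightarrow> ('n + 'n) set" and G :: "nat \<Rightarrow> 'n + 'n" and L :: nat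
  assumes L: "L \<ge> 1" and B0: "B 0 = range Inl" and G0: "G 0 = Inr jstar"
    and step: "\<And>t. t < L \<Longrightarrow> G t \<notin> B t \<and> (\<exists>c\<in>B t. r c = r (G t) \<and>
                 B (Suc t) = insert (G t) (B t) - {c} \<and> (Suc t < L \<longrightarrow> G (Suc t) = twin c))"
    and nfl: "\<And>t. 0 < t \<Longrightarrow> t < L \<Longrightarrow> \<not> fully_labeled (B t)"
    and fl: "fully_labeled (B L)"
  shows "LH_run isB jstar (map B [0..<Suc L]) (map G [0..<L])"
proof -
  have allB: "t \<le> L \<Longrightarrow> isB (B t)" for t
  proof (induction t)
    case 0 then show ?case using B0 isB_Inl by simp
  next
    case (Suc t)
    then have "t < L" by simp
    from step[OF this] obtain c where "G t \<notin> B t" "c \<in> B t" "r c = r (G t)"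
      "B (Suc t) = insert (G t) (B t) - {c}" by blast
    then show ?case using swap Suc by simp
  qed
  have nthB: "map B [0..<Suc L] ! t = B t" if "t < Suc L" for t using that by (simp del: upt_Suc)
  have nthG: "map G [0..<L] ! t = G t" if "t < L" for t using that by simp
  have F1: "isB (B (Suc t)) \<and> B (Suc t) \<subseteq> insert (G t) (B t) \<and> B (Suc t) \<noteq> B t \<and>
      (\<forall>B'. isB B' \<and> B' \<subseteq> insert (G t) (B t) \<and> B' \<noteq> B t \<longrightarrow> B' = B (Suc t))"
    if tL: "t < L" for t
  proof -
    from step[OF tL] obtain c where st: "G t \<notin> B t" "c \<in> B t" "r c = r (G t)"
      "B (Suc t) = insert (G t) (B t) - {c}" by blast
    have gc: "G t \<noteq> c" using st by auto
    have "G t \<in> B (Suc t)" using st gc by simp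
    then have ne: "B (Suc t) \<noteq> B t" using st(1) by blast
    have i1: "isB (B (Suc t))" using allB[of "Suc t"] tL by simp
    have i2: "B (Suc t) \<subseteq> insert (G t) (B t)" using st(4) by blast
    have i3: "\<forall>B'. isB B' \<and> B' \<subseteq> insert (G t) (B t) \<and> B' \<noteq> B t \<longrightarrow> B' = B (Suc t)"
      using uniq[OF allB[of t] st(1) st(2) st(3)] st(4) tL by simp
    show ?thesis using i1 i2 ne i3 by blast
  qed
  have F2: "insert (G t) (B t) - B (Suc t) = {twin (G (Suc t))}" if tL: "Suc t < L" for t
  proof -
    from step[of t] tL obtain c where st: "G t \<notin> B t" "c \<in> B t"
      "B (Suc t) = insert (G t) (B t) - {c}" "G (Suc t) = twin c" by auto
    have "insert (G t) (B t) - B (Suc t) = {c}" using st by auto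
    then show ?thesis using st by (metis twin_twin)
  qed
  have len: "length (map B [0..<Suc L]) - 1 = L" by simp
  show ?thesis
    unfolding LH_run_def len
  proof (intro conjI)
    show "2 \<le> length (map B [0..<Suc L])" using L by simp
    show "length (map G [0..<L]) = L" by simp
    show "map B [0..<Suc L] ! 0 = range Inl" using B0 by (simp del: upt_Suc)
    show "isB (map B [0..<Suc L] ! 0)" using B0 isB_Inl by (simp del: upt_Suc)
    show "map G [0..<L] ! 0 = Inr jstar" using G0 L by simp
    show "fully_labeled (last (map B [0..<Suc L]))" using fl by simp
    show "\<forall>t<L. isB (map B [0..<Suc L] ! Suc t) \<and>
        map B [0..<Suc L] ! Suc t \<subseteq> insert (map G [0..<L] ! t) (map B [0..<Suc L] ! t) \<and>
        map B [0..<Suc L] ! Suc t \<noteq> map B [0..<Suc L] ! t \<and>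
        (\<forall>B'. isB B' \<and> B' \<subseteq> insert (map G [0..<L] ! t) (map B [0..<Suc L] ! t) \<and>
              B' \<noteq> map B [0..<Suc L] ! t \<longrightarrow> B' = map B [0..<Suc L] ! Suc t)"
    proof (intro allI impI)
      fix t assume tL: "t < L"
      have e1: "map B [0..<Suc L] ! Suc t = B (Suc t)" using nthB tL by simp
      have e2: "map B [0..<Suc L] ! t = B t" using nthB tL by simp
      have e3: "map G [0..<L] ! t = G t" using nthG tL by simp
      show "isB (map B [0..<Suc L] ! Suc t) \<and>
        map B [0..<Suc L] ! Suc t \<subseteq> insert (map G [0..<L] ! t) (map B [0..<Suc L] ! t) \<and>
        map B [0..<Suc L] ! Suc t \<noteq> map B [0..<Suc L] ! t \<and>
        (\<forall>B'. isB B' \<and> B' \<subseteq> insert (map G [0..<L] ! t) (map B [0..<Suc L] ! t) \<and>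
              B' \<noteq> map B [0..<Suc L] ! t \<longrightarrow> B' = map B [0..<Suc L] ! Suc t)"
        unfolding e1 e2 e3 using F1[OF tL] .
    qed
    show "\<forall>t. Suc t < L \<longrightarrow> insert (map G [0..<L] ! t) (map B [0..<Suc L] ! t) - map B [0..<Suc L] ! Suc t =
        {twin (map G [0..<L] ! Suc t)}"
    proof (intro allI impI)
      fix t assume tL: "Suc t < L"
      have e1: "map B [0..<Suc L] ! Suc t = B (Suc t)" using nthB tL by simp
      have e2: "map B [0..<Suc L] ! t = B t" using nthB tL by simp
      have e3: "map G [0..<L] ! t = G t" using nthG tL by simp
      have e4: "map G [0..<L] ! Suc t = G (Suc t)" using nthG tL by simp
      show "insert (map G [0..<L] ! t) (map B [0..<Suc L] ! t) - map B [0..<Suc L] ! Suc t =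
        {twin (map G [0..<L] ! Suc t)}" unfolding e1 e2 e3 e4 using F2[OF tL] .
    qed
    show "\<forall>t. 0 < t \<and> t < L \<longrightarrow> \<not> fully_labeled (map B [0..<Suc L] ! t)"
      using nfl nthB by simp
  qed
qed

end

context comb begin

lemma comb_run:
  fixes jstar :: 'n
  shows "\<exists>Bs Gs. LH_run isB jstar Bs Gs \<and> length Bs - 1 \<le> 2 * CARD('n) - 1 \<and> (\<exists>j. Inr j \<in> last Bs)"
proof -
  define f where "f j = r (Inr j)" for j
  define p where "p s = (f ^^ s) jstar" for s
  have pS: "p (Suc s) = f (p s)" for s by (simp add: p_def)
  have p0: "p 0 = jstar" by (simp add: p_def)
  define n where "n = CARD('n)"
  have ex: "\<exists>s. s < n \<and> f (p s) \<in> p ` {..s}"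
  proof -
    have "\<not> inj_on p {..n}"
    proof
      assume "inj_on p {..n}"
      then have "card {..n} \<le> card (UNIV::'n set)" by (rule card_inj_on_le) auto
      then show False by (simp add: n_def)
    qed
    then obtain a b where ab: "a \<le> n" "b \<le> n" "a \<noteq> b" "p a = p b" unfolding inj_on_def by auto
    have "\<exists>x y. x < y \<and> y \<le> n \<and> p x = p y"
    proof (cases "a < b")
      case True then show ?thesis using ab by blast
    next
      case False then have "b < a" using ab by simp
      then show ?thesis using ab by metis
    qed
    then obtain x y where xy: "x < y" "y \<le> n" "p x = p y" by blast
    then obtain s where s: "y = Suc s" by (cases y) auto
    have "f (p s) = p x" using xy s pS by simp
    moreover have "x \<le> s" using xy s by simp
    ultimately have "f (p s) \<in> p ` {..s}" by auto
    moreover have "s < n" using xy s by simp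
    ultimately show ?thesis by blast
  qed
  define k where "k = (LEAST s. f (p s) \<in> p ` {..s})"
  have kP: "f (p k) \<in> p ` {..k}" unfolding k_def using ex by (metis (mono_tags, lifting) LeastI_ex)
  have kn: "k < n"
  proof -
    obtain s where s: "s < n" "f (p s) \<in> p ` {..s}" using ex by blast
    have "k \<le> s" unfolding k_def by (rule Least_le) (rule s(2))
    then show ?thesis using s(1) by simp
  qed
  have kmin: "f (p s) \<notin> p ` {..s}" if "s < k" for s
    using that not_less_Least unfolding k_def by blast
  have injp: "inj_on p {..k}"
  proof (rule inj_onI)
    fix a b assume ab: "a \<in> {..k}" "b \<in> {..k}" "p a = p b"
    show "a = b"
    proof (rule ccontr)
      assume "a \<noteq> b"
      then have "\<exists>x y. x < y \<and> y \<le> k \<and> p x = p y"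
        using ab by (metis atMost_iff linorder_neqE_nat)
      then obtain x y where xy: "x < y" "y \<le> k" "p x = p y" by blast
      then obtain s where s: "y = Suc s" by (cases y) auto
      have "f (p s) = p x" using xy s pS by simp
      moreover have "x \<le> s" using xy s by simp
      ultimately have "f (p s) \<in> p ` {..s}" by auto
      moreover have "s < k" using xy s by simp
      ultimately show False using kmin by blast
    qed
  qed
  have pin: "p x \<in> p ` S \<longleftrightarrow> x \<in> S" if "x \<le> k" "S \<subseteq> {..k}" for x S
  proof
    assume "p x \<in> p ` S"
    then obtain y where "y \<in> S" "p x = p y" by auto
    then have "x = y" using injp that by (auto simp: inj_on_def)
    then show "x \<in> S" using \<open>y \<in> S\<close> by simp
  qed auto
  have pdiff: "p ` (X - Y) = p ` X - p ` Y" if "X \<subseteq> {..k}" "Y \<subseteq> {..k}" for X Y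
    by (rule inj_on_image_set_diff[OF injp]) (use that in auto)
  obtain m where m: "m \<le> k" "f (p k) = p m" using kP by auto

  define F where "F t = Inl ` (- p ` {1..t}) \<union> Inr ` p ` {..<t}" for t
  have F0: "F 0 = range Inl" by (auto simp: F_def)
  have fwd1: "Inr (p t) \<notin> F t" if "t \<le> k" for t
  proof -
    have sub: "{..<t} \<subseteq> {..k}" using that by auto
    have "p t \<notin> p ` {..<t}" using pin[OF that sub] by simp
    then show ?thesis by (auto simp: F_def)
  qed
  have fwd2: "Inl (p (Suc t)) \<in> F t" if "t < k" for t
  proof -
    have sub: "{1..t} \<subseteq> {..k}" using that by auto
    have "p (Suc t) \<notin> p ` {1..t}" using pin[OF _ sub, of "Suc t"] that by simp
    then show ?thesis by (auto simp: F_def)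
  qed
  have fwd3: "r (Inl (p (Suc t))) = r (Inr (p t))" for t by (simp add: r_Inl pS f_def)
  have fwd4: "F (Suc t) = insert (Inr (p t)) (F t) - {Inl (p (Suc t))}" for t
  proof -
    have e1: "{1..Suc t} = insert (Suc t) {1..t}" by auto
    have e2: "{..<Suc t} = insert t {..<t}" by auto
    show ?thesis unfolding F_def e1 e2 by auto
  qed
  have nflF: "\<not> fully_labeled (F t)" if "1 \<le> t" "t \<le> k" for t
  proof -
    have "Inl (p t) \<notin> F t" using that by (auto simp: F_def)
    moreover have "Inr (p t) \<notin> F t" using fwd1 that by simp
    ultimately show ?thesis unfolding fully_labeled_def by blast
  qed
  have bound0: "Suc k \<le> 2 * CARD('n) - 1" using kn by (simp add: n_def)

  show ?thesis
  proof (cases "m = 0")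
    case True
    define Bf where "Bf = Inl ` (- p ` {..k}) \<union> Inr ` p ` {..k}"
    define B where "B t = (if t \<le> k then F t else Bf)" for t
    define G :: "nat \<Rightarrow> 'n + 'n" where "G t = Inr (p t)" for t
    have run: "LH_run isB jstar (map B [0..<Suc (Suc k)]) (map G [0..<Suc k])"
    proof (rule run_from_steps)
      show "1 \<le> Suc k" by simp
      show "B 0 = range Inl" using F0 by (simp add: B_def)
      show "G 0 = Inr jstar" using p0 by (simp add: G_def)
    next
      fix t assume t: "t < Suc k"
      show "G t \<notin> B t \<and> (\<exists>c\<in>B t. r c = r (G t) \<and>
              B (Suc t) = insert (G t) (B t) - {c} \<and> (Suc t < Suc k \<longrightarrow> G (Suc t) = twin c))"
      proof (cases "t < k")
        case True
        have "G t \<notin> B t" using fwd1 True by (simp add: B_def G_def)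
        moreover have "Inl (p (Suc t)) \<in> B t \<and> r (Inl (p (Suc t))) = r (G t) \<and>
              B (Suc t) = insert (G t) (B t) - {Inl (p (Suc t))} \<and>
              (Suc t < Suc k \<longrightarrow> G (Suc t) = twin (Inl (p (Suc t))))"
          using fwd2[OF True] fwd3[of t] fwd4[of t] True by (simp add: B_def G_def)
        ultimately show ?thesis by blast
      next
        case False
        then have tk: "t = k" using t by simp
        have "G t \<notin> B t" using fwd1 tk by (simp add: B_def G_def)
        moreover have "Inl (p 0) \<in> B t"
        proof -
          have "p 0 \<notin> p ` {1..k}" using pin[of 0 "{1..k}"] by simp
          then show ?thesis using tk by (auto simp: B_def F_def)
        qed
        moreover have "r (Inl (p 0)) = r (G t)" using tk m True by (simp add: r_Inl G_def f_def)
        moreover have "B (Suc t) = insert (G t) (B t) - {Inl (p 0)}"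
        proof -
          have e1: "{..k} = insert 0 {1..k}" by auto
          have e2: "{..k} = insert k {..<k}" by auto
          have "Bf = insert (Inr (p k)) (F k) - {Inl (p 0)}"
            unfolding Bf_def F_def
            by (rule set_eqI) (subst (1) e1, subst (1) e2, auto)
          then show ?thesis using tk by (simp add: B_def G_def)
        qed
        ultimately show ?thesis using tk by blast
      qed
    next
      fix t assume "0 < t" "t < Suc k"
      then show "\<not> fully_labeled (B t)" using nflF by (simp add: B_def)
    next
      show "fully_labeled (B (Suc k))" by (auto simp: B_def Bf_def fully_labeled_def)
    qed
    have "Inr (p k) \<in> last (map B [0..<Suc (Suc k)])" by (simp add: B_def Bf_def)
    then show ?thesis using run bound0 by (intro exI[of _ "map B [0..<Suc (Suc k)]"] exI[of _ "map G [0..<Suc k]"]) auto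
  next
    case False
    then have m1: "1 \<le> m" by simp
    define Bd where "Bd d = Inl ` (- p ` ({1..k} - {Suc d..<m})) \<union> Inr ` p ` ({..k} - {d..<m})" for d
    define B where "B t = (if t \<le> k then F t else Bd (k + m - t))" for t
    define G where "G t = (if t \<le> k then Inr (p t) else Inl (p (k + m - t)))" for t
    have bk: "Inl (p (Suc d)) \<notin> Bd (Suc d) \<and> Inr (p d) \<in> Bd (Suc d) \<and>
        r (Inr (p d)) = r (Inl (p (Suc d))) \<and>
        Bd d = insert (Inl (p (Suc d))) (Bd (Suc d)) - {Inr (p d)}" if d: "Suc d < m" for d
    proof (intro conjI)
      have "Suc d \<in> {1..k} - {Suc (Suc d)..<m}" using d m by auto
      then show "Inl (p (Suc d)) \<notin> Bd (Suc d)" by (auto simp: Bd_def)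
      have "d \<in> {..k} - {Suc d..<m}" using d m by auto
      then show "Inr (p d) \<in> Bd (Suc d)" by (auto simp: Bd_def)
      show "r (Inr (p d)) = r (Inl (p (Suc d)))" by (simp add: r_Inl pS f_def)
      have s1: "p ` ({1..k} - {Suc d..<m}) = p ` {1..k} - p ` {Suc d..<m}"
        using m by (intro pdiff) auto
      have s2: "p ` ({1..k} - {Suc (Suc d)..<m}) = p ` {1..k} - p ` {Suc (Suc d)..<m}"
        using m by (intro pdiff) auto
      have s3: "p ` ({..k} - {d..<m}) = p ` {..k} - p ` {d..<m}"
        using m by (intro pdiff) auto
      have s4: "p ` ({..k} - {Suc d..<m}) = p ` {..k} - p ` {Suc d..<m}"
        using m by (intro pdiff) auto
      have i1: "{Suc d..<m} = insert (Suc d) {Suc (Suc d)..<m}" using d by auto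
      have i2: "{d..<m} = insert d {Suc d..<m}" using d by auto
      have mem: "p (Suc d) \<in> p ` {1..k}" using d m by auto
      show "Bd d = insert (Inl (p (Suc d))) (Bd (Suc d)) - {Inr (p d)}"
        unfolding Bd_def s1 s2 s3 s4
        by (rule set_eqI) (subst (1) i1, subst (1) i2, use mem in auto)
    qed
    have nflB: "\<not> fully_labeled (Bd (Suc d))" if d: "Suc d < m" for d
    proof -
      have "Inl (p (Suc d)) \<notin> Bd (Suc d)" using bk[OF d] by simp
      moreover have "p (Suc d) \<notin> p ` ({..k} - {Suc d..<m})"
        using pin[of "Suc d" "{..k} - {Suc d..<m}"] d m by simp
      then have "Inr (p (Suc d)) \<notin> Bd (Suc d)" by (auto simp: Bd_def)
      ultimately show ?thesis unfolding fully_labeled_def by blast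
    qed
    have run: "LH_run isB jstar (map B [0..<Suc (k + m)]) (map G [0..<k + m])"
    proof (rule run_from_steps)
      show "1 \<le> k + m" using m1 by simp
      show "B 0 = range Inl" using F0 by (simp add: B_def)
      show "G 0 = Inr jstar" using p0 by (simp add: G_def)
    next
      fix t assume t: "t < k + m"
      show "G t \<notin> B t \<and> (\<exists>c\<in>B t. r c = r (G t) \<and>
              B (Suc t) = insert (G t) (B t) - {c} \<and> (Suc t < k + m \<longrightarrow> G (Suc t) = twin c))"
      proof (cases "t < k")
        case True
        have "G t \<notin> B t" using fwd1 True by (simp add: B_def G_def)
        moreover have "Inl (p (Suc t)) \<in> B t \<and> r (Inl (p (Suc t))) = r (G t) \<and>
              B (Suc t) = insert (G t) (B t) - {Inl (p (Suc t))} \<and>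
              (Suc t < k + m \<longrightarrow> G (Suc t) = twin (Inl (p (Suc t))))"
          using fwd2[OF True] fwd3[of t] fwd4[of t] True by (simp add: B_def G_def)
        ultimately show ?thesis by blast
      next
        case False
        show ?thesis
        proof (cases "t = k")
          case tk: True
          have "G t \<notin> B t" using fwd1 tk by (simp add: B_def G_def)
          moreover have "Inr (p (m - 1)) \<in> B t"
            using tk m m1 by (auto simp: B_def F_def)
          moreover have "r (Inr (p (m - 1))) = r (G t)"
          proof -
            have "r (Inr (p (m - 1))) = p (Suc (m - 1))" by (simp add: pS f_def)
            also have "\<dots> = p m" using m1 by simp
            finally show ?thesis using tk m by (simp add: G_def f_def)
          qed
          moreover have "B (Suc t) = insert (G t) (B t) - {Inr (p (m - 1))}"
          proof -
            have bs: "B (Suc k) = Bd (m - 1)" by (simp add: B_def)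
            have e0: "{Suc (m - 1)..<m} = {}" using m1 by auto
            have e1: "{m - 1..<m} = {m - 1}" using m1 by auto
            have e2: "{..k} = insert k {..<k}" by auto
            have s3: "p ` ({..k} - {m - 1}) = p ` {..k} - {p (m - 1)}"
              using pdiff[of "{..k}" "{m - 1}"] m by auto
            have ne: "p k \<noteq> p (m - 1)" using pin[of k "{m - 1}"] m m1 by simp
            have "Bd (m - 1) = insert (Inr (p k)) (F k) - {Inr (p (m - 1))}"
              unfolding Bd_def F_def e0 e1 s3
              by (rule set_eqI) (subst (1) e2, use ne in auto)
            then show ?thesis using tk bs by (simp add: B_def G_def)
          qed
          moreover have "Suc t < k + m \<longrightarrow> G (Suc t) = twin (Inr (p (m - 1)))"
            using tk by (simp add: G_def)
          ultimately show ?thesis by blast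
        next
          case tk: False
          then have kt: "k < t" using False by simp
          obtain d where d: "k + m - t = Suc d" using t by (cases "k + m - t") auto
          have dm: "Suc d < m" using d kt by simp
          have d2: "k + m - Suc t = d" using d by simp
          have Bt: "B t = Bd (Suc d)" using kt d by (simp add: B_def)
          have Gt: "G t = Inl (p (Suc d))" using kt d by (simp add: G_def)
          have Bs: "B (Suc t) = Bd d" using kt d2 by (simp add: B_def)
          have Gs: "G (Suc t) = Inl (p d)" using kt d2 by (simp add: G_def)
          show ?thesis using bk[OF dm] unfolding Bt Gt Bs Gs by auto
        qed
      qed
    next
      fix t assume t: "0 < t" "t < k + m"
      show "\<not> fully_labeled (B t)"
      proof (cases "t \<le> k")
        case True then show ?thesis using nflF t by (simp add: B_def)
      next
        case False
        obtain d where d: "k + m - t = Suc d" using t False by (cases "k + m - t") auto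
        have dm: "Suc d < m" using d False by simp
        have "B t = Bd (Suc d)" using False d by (simp add: B_def)
        then show ?thesis using nflB[OF dm] by simp
      qed
    next
      have Bl: "B (k + m) = Bd 0" using m1 by (simp add: B_def)
      have sub: "{1..k} - {Suc 0..<m} \<subseteq> {..k} - {0..<m}" by auto
      show "fully_labeled (B (k + m))"
        unfolding Bl fully_labeled_def
      proof
        fix i
        show "Inl i \<in> Bd 0 \<or> Inr i \<in> Bd 0"
        proof (cases "i \<in> p ` ({..k} - {0..<m})")
          case True then show ?thesis by (auto simp: Bd_def)
        next
          case False
          then have "i \<notin> p ` ({1..k} - {Suc 0..<m})" using sub by blast
          then show ?thesis by (auto simp: Bd_def)
        qed
      qed
    qed
    have "last (map B [0..<Suc (k + m)]) = Bd 0" using m1 by (simp add: B_def)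
    moreover have "Inr (p k) \<in> Bd 0" using m by (auto simp: Bd_def)
    moreover have "k + m \<le> 2 * CARD('n) - 1" using kn m by (simp add: n_def)
    ultimately show ?thesis using run
      by (intro exI[of _ "map B [0..<Suc (k + m)]"] exI[of _ "map G [0..<k + m]"]) auto
  qed
qed

end

definition lab :: "'n + 'n \<Rightarrow> 'n" where "lab c = (case c of Inl i \<Rightarrow> i | Inr i \<Rightarrow> i)"

lemma fl_not_both:
  fixes B :: "('n::finite + 'n) set"
  assumes fl: "fully_labeled B" and card: "card B = CARD('n)"
  shows "\<not> (Inl i \<in> B \<and> Inr i \<in> B)"
proof
  assume both: "Inl i \<in> B \<and> Inr i \<in> B"
  have "CARD('n) > 0" by simp
  then have fin: "finite B" using card card_ge_0_finite by metis
  have im: "lab ` B = UNIV"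
  proof (rule set_eqI, rule iffI)
    fix j :: 'n
    from fl have "Inl j \<in> B \<or> Inr j \<in> B" unfolding fully_labeled_def by blast
    then show "j \<in> lab ` B" by (metis image_eqI lab_def sum.case(1) sum.case(2))
  qed simp
  have "inj_on lab B" by (rule eq_card_imp_inj_on[OF fin]) (simp add: im card)
  then have "Inl i = (Inr i :: 'n + 'n)" using both unfolding inj_on_def by (metis lab_def sum.case(1) sum.case(2))
  then show False by simp
qed

theorem theorem5p6:
  fixes M :: "real^'n^'n" and q :: "real^'n" and jstar :: 'n
  assumes "NECP_instance M q"
    and "dominance M q"
  shows "\<exists>Bs Gs.
           LH_run (classical_basis (NECP_matrix M) q) jstar Bs Gs \<and>
           LH_run (tropical_basis (TNECP_matrix M) (TNECP_rhs q)) jstar Bs Gs \<and>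
           length Bs - 1 \<le> 2 * CARD('n) - 1 \<and>
           basis_of_solution M q (last Bs)"
proof -
  interpret lh M q using assms by unfold_locales
  interpret cb: comb r by unfold_locales (rule r_Inl)
  have isBC: "cb.isB = isC" by (rule ext) (simp add: cb.isB_def isC_def)
  obtain Bs Gs where run: "LH_run isC jstar Bs Gs" and len: "length Bs - 1 \<le> 2 * CARD('n) - 1"
    and inr: "\<exists>j. Inr j \<in> last Bs"
    using cb.comb_run[of jstar] unfolding isBC by blast
  define B where "B = last Bs"
  have lenBs: "length Bs \<ge> 2" using run unfolding LH_run_def by blast
  have e: "Suc (length Bs - 2) = length Bs - 1" using lenBs by arith
  have ne: "Bs \<noteq> []" using lenBs by auto
  have lastB: "B = Bs ! Suc (length Bs - 2)" unfolding B_def e using last_conv_nth[OF ne] .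
  have "isC (Bs ! Suc (length Bs - 2))" using run lenBs unfolding LH_run_def by auto
  then have BC: "isC B" using lastB by simp
  have fl: "fully_labeled B" using run unfolding LH_run_def B_def by blast
  have cbB: "classical_basis (NECP_matrix M) q B" using isC_imp_classical[OF BC] .
  then obtain x where card: "card B = CARD('n)" and x0: "\<forall>c. 0 \<le> x c"
    and xz: "\<forall>c. c \<notin> B \<longrightarrow> x c = 0" and s: "(\<Sum>c\<in>B. x c *\<^sub>R col c) = q"
    unfolding classical_basis_def by blast
  have fin: "finite B" using isC_finite[OF BC] .
  have rows: "(\<Sum>c\<in>B. x c * A i c) = q$i" for i
    using arg_cong[OF s, of "\<lambda>v. v $ i"] by (simp add: col_comp)
  have rowsU: "(\<Sum>c\<in>UNIV. x c * A i c) = q$i" for i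
  proof -
    have "(\<Sum>c\<in>UNIV. x c * A i c) = (\<Sum>c\<in>B. x c * A i c)"
      by (rule sum.mono_neutral_right) (use xz in auto)
    then show ?thesis using rows by simp
  qed
  define w :: "real^'n" where "w = (\<chi> i. x (Inl i))"
  define z :: "real^'n" where "z = (\<chi> j. x (Inr j))"
  have split: "(\<Sum>c\<in>UNIV. x c * A i c) = w$i - (M *v z)$i" for i
  proof -
    have "(\<Sum>c\<in>UNIV. x c * A i c) = (\<Sum>j\<in>UNIV. x (Inl j) * A i (Inl j)) + (\<Sum>j\<in>UNIV. x (Inr j) * A i (Inr j))"
      by (subst UNIV_Plus_UNIV[symmetric], subst sum.Plus) (simp_all add: comp_def)
    also have "(\<Sum>j\<in>UNIV. x (Inl j) * A i (Inl j)) = x (Inl i)"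
    proof -
      have "(\<Sum>j\<in>UNIV. x (Inl j) * A i (Inl j)) = (\<Sum>j\<in>UNIV. if i = j then x (Inl j) else 0)"
        by (rule sum.cong) (auto simp: A_Inl)
      then show ?thesis by simp
    qed
    also have "(\<Sum>j\<in>UNIV. x (Inr j) * A i (Inr j)) = - (\<Sum>j\<in>UNIV. M$i$j * x (Inr j))"
      by (simp add: A_Inr sum_negf[symmetric] mult.commute)
    finally show ?thesis by (simp add: w_def z_def matrix_vector_mult_def)
  qed
  have weq: "w = M *v z + q"
    unfolding vec_eq_iff using split rowsU by (simp add: algebra_simps)
  have wz: "w \<bullet> z = 0"
  proof -
    have "x (Inl i) * x (Inr i) = 0" for i
      using fl_not_both[OF fl card, of i] xz by auto
    then have "(\<Sum>i\<in>UNIV. x (Inl i) * x (Inr i)) = 0" by (intro sum.neutral) auto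
    then show ?thesis by (simp add: inner_vec_def w_def z_def)
  qed
  have znz: "z \<noteq> 0"
  proof
    assume z0: "z = 0"
    then have "w = q" using weq by simp
    then have "x (Inl i) > 0" for i using q_pos[of i] by (simp add: w_def vec_eq_iff)
    then have "Inl i \<in> B" for i using xz by (metis less_irrefl)
    then have sub: "range Inl \<subseteq> B" by auto
    have "card (range (Inl :: 'n \<Rightarrow> 'n + 'n)) = CARD('n)" by (simp add: card_image)
    then have "range Inl = B" using card_subset_eq[OF fin sub] card by simp
    then show False using inr unfolding B_def[symmetric] by auto
  qed
  have sol: "NECP_solution M q w z"
  proof -
    have w0: "\<forall>i. 0 \<le> w$i" using x0 by (simp add: w_def)
    have z0: "\<forall>i. 0 \<le> z$i" using x0 by (simp add: z_def)
    show ?thesis unfolding NECP_solution_def using weq wz znz w0 z0 by blast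
  qed
  have bos: "basis_of_solution M q B"
  proof -
    have "\<forall>i. w $ i \<noteq> 0 \<longrightarrow> Inl i \<in> B" using xz by (auto simp: w_def)
    moreover have "\<forall>j. z $ j \<noteq> 0 \<longrightarrow> Inr j \<in> B" using xz by (auto simp: z_def)
    ultimately show ?thesis using cbB sol unfolding basis_of_solution_def by blast
  qed
  show ?thesis
    using run len bos unfolding classical_eq tropical_eq B_def by blast
qed


end
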